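(* Let $X$ be a linearly ordered set and let $n\ge6$ be even. Then $\mathrm{med}_3\in\langle\{m^n_{n/2}\}\rangle$ and $\mathrm{med}_3\in\langle\{m^n_{n/2+1}\}\rangle$; in each case $\mathrm{med}_3(x_1,x_2,x_3)$ is obtained by substituting into $m^n_{n/2}$ (resp. $m^n_{n/2+1}$) the tuple $(x_1,\dots,x_1,x_2,\dots,x_2,x_3,\dots,x_3)$ where $x_j$ occurs $\lfloor n/3\rfloor+1$ times if $j\le R(n/3)$ and $\lfloor n/3\rfloor$ times otherwise. Consequently these lower and upper medians generate all median functions $\mathrm{med}_m$, $m\ge3$ odd.
   Context: For $n\ge1$, $1\le k\le n$, $m^n_k(x_1,\dots,x_n)$ is the $k$-th smallest entry of $(x_1,\dots,x_n)$ (counted with multiplicity); for odd $m$, $\mathrm{med}_m=m^m_{(m+1)/2}$. $R(n/3)$ is the remainder of $n$ upon division by $3$. A clone on $X$ is a set of finitary operations containing all projections and closed under composition; $\langle\mathscr F\rangle$ is the smallest clone containing $\mathscr F$. *)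

theory Defs
  imports Main
begin

text \<open>A finitary operation of arity k on the carrier (the type 'a) is a pair (k, f) where
  f is applied to lists of length k; values on lists of other lengths are irrelevant.\<close>

type_synonym 'a operation = "nat \<times> ('a list \<Rightarrow> 'a)"

definition is_clone :: "'a operation set \<Rightarrow> bool" where
  "is_clone C \<longleftrightarrow>
     (\<forall>k i. i < k \<longrightarrow> (k, \<lambda>xs. xs ! i) \<in> C) \<and>
     (\<forall>k f m gs. (k, f) \<in> C \<longrightarrow> length gs = k \<longrightarrow> (\<forall>g\<in>set gs. (m, g) \<in> C) \<longrightarrow>
        (m, \<lambda>xs. f (map (\<lambda>g. g xs) gs)) \<in> C) \<and>
     (\<forall>k f g. (k, f) \<in> C \<longrightarrow> (\<forall>xs. length xs = k \<longrightarrow> g xs = f xs) \<longrightarrow> (k, g) \<in> C)"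

definition clone_gen :: "'a operation set \<Rightarrow> 'a operation set" where
  "clone_gen F = \<Inter>{C. is_clone C \<and> F \<subseteq> C}"

definition kth_smallest :: "nat \<Rightarrow> 'a::linorder list \<Rightarrow> 'a" where
  "kth_smallest k xs = sort xs ! (k - 1)"

definition med :: "nat \<Rightarrow> 'a::linorder list \<Rightarrow> 'a" where
  "med m xs = kth_smallest ((m + 1) div 2) xs"

definition mult3 :: "nat \<Rightarrow> nat \<Rightarrow> nat" where
  "mult3 n j = (if j \<le> n mod 3 then n div 3 + 1 else n div 3)"

definition subst_tuple :: "nat \<Rightarrow> 'a \<Rightarrow> 'a \<Rightarrow> 'a \<Rightarrow> 'a list" where
  "subst_tuple n x1 x2 x3 =
     replicate (mult3 n 1) x1 @ replicate (mult3 n 2) x2 @ replicate (mult3 n 3) x3"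

end

theory Submission
  imports Defs "HOL-Library.Multiset"
begin

lemma len_filter_mset:
  "mset xs = mset ys \<Longrightarrow> length (filter P xs) = length (filter P ys)"
  by (metis mset_filter size_mset)

lemma kth_le:
  fixes xs :: "'a::linorder list"
  assumes "1 \<le> k" "k \<le> length xs"
  shows "kth_smallest k xs \<le> t \<longleftrightarrow> k \<le> length (filter (\<lambda>x. x \<le> t) xs)"
proof -
  define s where "s = sort xs"
  have ss: "sorted s" and ls: "length s = length xs" by (simp_all add: s_def)
  have cnt: "length (filter (\<lambda>x. x \<le> t) s) = length (filter (\<lambda>x. x \<le> t) xs)"
    unfolding s_def by (rule len_filter_mset) simp
  have kd: "kth_smallest k xs = s ! (k - 1)" by (simp add: kth_smallest_def s_def)
  show ?thesis
  proof (cases "s ! (k - 1) \<le> t")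
    case True
    have "\<forall>x\<in>set (take k s). x \<le> t"
    proof
      fix x assume "x \<in> set (take k s)"
      then obtain i where i: "i < length (take k s)" "x = take k s ! i" by (metis in_set_conv_nth)
      then have "x = s ! i" "i \<le> k - 1" "k - 1 < length s" using assms ls by auto
      then have "x \<le> s ! (k - 1)" using ss by (simp add: sorted_nth_mono)
      then show "x \<le> t" using True by simp
    qed
    then have "filter (\<lambda>x. x \<le> t) (take k s) = take k s" by simp
    then have "k \<le> length (filter (\<lambda>x. x \<le> t) (take k s))" using assms ls by simp
    also have "\<dots> \<le> length (filter (\<lambda>x. x \<le> t) s)"
      by (metis append_take_drop_id filter_append length_append le_add1)
    finally show ?thesis using True kd cnt by simp
  next
    case False
    have "\<forall>x\<in>set (drop (k - 1) s). \<not> x \<le> t"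
    proof
      fix x assume "x \<in> set (drop (k - 1) s)"
      then obtain i where i: "i < length (drop (k - 1) s)" "x = drop (k - 1) s ! i" by (metis in_set_conv_nth)
      then have "x = s ! (k - 1 + i)" "k - 1 + i < length s" using assms ls by auto
      then have "s ! (k - 1) \<le> x" using ss by (simp add: sorted_nth_mono)
      then show "\<not> x \<le> t" using False by simp
    qed
    then have "filter (\<lambda>x. x \<le> t) (drop (k - 1) s) = []" by (simp add: filter_empty_conv)
    then have "length (filter (\<lambda>x. x \<le> t) s) = length (filter (\<lambda>x. x \<le> t) (take (k - 1) s))"
      by (metis append_take_drop_id filter_append append_Nil2)
    also have "\<dots> \<le> k - 1" by (metis length_filter_le length_take min.bounded_iff nat_le_linear order_trans)
    finally show ?thesis using False kd cnt assms by simp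
  qed
qed

lemma thr_eq:
  fixes u v :: "'a::linorder"
  shows "(\<And>t. u \<le> t \<longleftrightarrow> v \<le> t) \<Longrightarrow> u = v"
  by (metis order.antisym order.refl)

lemma med3_le:
  fixes a b c :: "'a::linorder"
  shows "med 3 [a, b, c] \<le> t \<longleftrightarrow>
    2 \<le> (if a \<le> t then 1 else 0) + (if b \<le> t then 1 else 0) + (if c \<le> (t::'a) then 1 else (0::nat))"
  unfolding med_def using kth_le[of 2 "[a,b,c]" t] by simp

lemma F_le:
  fixes xs :: "'a::linorder list"
  assumes "odd (length L)"
  shows "kth_smallest ((length L + 1) div 2) (map (nth xs) L) \<le> t \<longleftrightarrow>
         length L < 2 * length (filter (\<lambda>i. xs ! i \<le> t) L)"
proof -
  have "length (filter (\<lambda>x. x \<le> t) (map (nth xs) L)) = length (filter (\<lambda>i. xs ! i \<le> t) L)"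
    by (simp add: filter_map comp_def)
  moreover have "1 \<le> (length L + 1) div 2" "(length L + 1) div 2 \<le> length (map (nth xs) L)"
    using assms by (auto elim: oddE)
  ultimately show ?thesis using kth_le[of "(length L + 1) div 2" "map (nth xs) L" t] assms
    by (auto elim!: oddE)
qed

lemma clone_proj: "is_clone C \<Longrightarrow> i < k \<Longrightarrow> (k, \<lambda>xs. xs ! i) \<in> C"
  unfolding is_clone_def by blast
lemma clone_comp: "is_clone C \<Longrightarrow> (k, f) \<in> C \<Longrightarrow> length gs = k \<Longrightarrow> (\<forall>g\<in>set gs. (m, g) \<in> C) \<Longrightarrow>
        (m, \<lambda>xs. f (map (\<lambda>g. g xs) gs)) \<in> C"
  unfolding is_clone_def by blast
lemma clone_ext: "is_clone C \<Longrightarrow> (k, f) \<in> C \<Longrightarrow> (\<forall>xs. length xs = k \<longrightarrow> g xs = f xs) \<Longrightarrow> (k, g) \<in> C"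
  unfolding is_clone_def by blast

lemma med_idx:
  fixes C :: "('a::linorder) operation set"
  assumes clone: "is_clone C" and m3: "(3, med 3) \<in> C"
  shows "odd (length L) \<Longrightarrow> set L \<subseteq> {..<m} \<Longrightarrow>
     (m, \<lambda>xs. kth_smallest ((length L + 1) div 2) (map (nth xs) L)) \<in> C"
proof (induction "length L + card (set L)" arbitrary: L rule: less_induct)
  case less
  show ?case
  proof (cases "\<exists>i\<in>set L. \<exists>j\<in>set L. i \<noteq> j")
    case False
    obtain i where iL: "i \<in> set L" using less.prems by (cases L) auto
    then have all: "\<forall>k\<in>set L. k = i" using False by blast
    have "i < m" using iL less.prems by auto
    have "(m, \<lambda>xs. xs ! i) \<in> C" by (rule clone_proj[OF clone \<open>i < m\<close>])
    moreover have "kth_smallest ((length L + 1) div 2) (map (nth xs) L) = xs ! i" for xs :: "'a list"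
    proof (rule thr_eq)
      fix t
      have "filter (\<lambda>k. xs ! k \<le> t) L = (if xs ! i \<le> t then L else [])"
        using all by (induction L) auto
      moreover have "length L \<noteq> 0" using iL by auto
      ultimately show "kth_smallest ((length L + 1) div 2) (map (nth xs) L) \<le> t \<longleftrightarrow> xs ! i \<le> t"
        using F_le[OF less.prems(1), of xs t] by auto
    qed
    ultimately show ?thesis using clone_ext[OF clone] by auto
  next
    case True
    then obtain i0 j0 where ij0: "i0 \<in> set L" "j0 \<in> set L" "i0 \<noteq> j0" by blast
    obtain i j where ij: "i \<in> set L" "j \<in> set L" "i \<noteq> j" "count (mset L) j \<le> count (mset L) i"
    proof (cases "count (mset L) j0 \<le> count (mset L) i0")
      case True then show ?thesis using that ij0 by blast
    next
      case False then show ?thesis using that[of j0 i0] ij0 by (metis nat_le_linear)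
    qed
    define a where "a = count (mset L) i"
    define b where "b = count (mset L) j"
    define R where "R = filter (\<lambda>k. k \<noteq> i \<and> k \<noteq> j) L"
    define L1 where "L1 = replicate (a + b) i @ R"
    define L2 where "L2 = replicate (a + b) j @ R"
    define L3 where "L3 = replicate (a - b) i @ R"
    have ab: "b \<le> a" "1 \<le> b" using ij a_def b_def by (auto simp: Suc_le_eq)
    have ms: "mset L = mset (replicate a i @ replicate b j @ R)"
      unfolding a_def b_def R_def using ij(3)
      by (auto simp: multiset_eq_iff)
    have lf: "length (filter P L) = (if P i then a else 0) + (if P j then b else 0) + length (filter P R)" for P
      using len_filter_mset[OF ms, of P] by simp
    have lL: "length L = a + b + length R" using lf[of "\<lambda>_. True"] by simp
    have sR: "set R \<subseteq> set L" "i \<notin> set R" "j \<notin> set R" unfolding R_def by auto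
    have sub: "set L \<subseteq> {..<m}" by (fact less.prems(2))
    have o1: "odd (length L1)" "odd (length L2)" "odd (length L3)"
      using less.prems(1) lL ab unfolding L1_def L2_def L3_def
      by (auto simp: even_add)
    have s1: "set L1 \<subseteq> {..<m}" "set L2 \<subseteq> {..<m}" "set L3 \<subseteq> {..<m}"
      using sR sub ij unfolding L1_def L2_def L3_def by (auto split: if_splits)
    have c1: "card (set L1) < card (set L)"
    proof (rule psubset_card_mono)
      show "set L1 \<subset> set L" using sR ij ab unfolding L1_def by auto
    qed simp
    have c2: "card (set L2) < card (set L)"
    proof (rule psubset_card_mono)
      show "set L2 \<subset> set L" using sR ij ab unfolding L2_def by auto
    qed simp
    have c3: "card (set L3) \<le> card (set L)"
    proof (rule card_mono)
      show "set L3 \<subseteq> set L" using sR ij ab unfolding L3_def by auto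
    qed simp
    have len: "length L1 = length L" "length L2 = length L" "length L3 < length L"
      using lL ab unfolding L1_def L2_def L3_def by auto
    define F where "F = (\<lambda>L' (xs::'a list). kth_smallest ((length L' + 1) div 2) (map (nth xs) L'))"
    have I1: "(m, F L1) \<in> C" unfolding F_def
      by (rule less.hyps) (use len c1 o1 s1 in auto)
    have I2: "(m, F L2) \<in> C" unfolding F_def
      by (rule less.hyps) (use len c2 o1 s1 in auto)
    have I3: "(m, F L3) \<in> C" unfolding F_def
      by (rule less.hyps) (use len c3 o1 s1 in auto)
    have comp: "(m, \<lambda>xs. med 3 (map (\<lambda>g. g xs) [F L1, F L2, F L3])) \<in> C"
      by (rule clone_comp[OF clone m3]) (use I1 I2 I3 in auto)
    have eq: "F L xs = med 3 [F L1 xs, F L2 xs, F L3 xs]" for xs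
    proof (rule thr_eq)
      fix t
      define p where "p = (xs ! i \<le> t)"
      define q where "q = (xs ! j \<le> t)"
      define r where "r = length (filter (\<lambda>k. xs ! k \<le> t) R)"
      have e0: "F L xs \<le> t \<longleftrightarrow> length L < 2 * ((if p then a else 0) + (if q then b else 0) + r)"
        unfolding F_def using F_le[OF less.prems(1), of xs t] lf[of "\<lambda>k. xs ! k \<le> t"] p_def q_def r_def by simp
      have e1: "F L1 xs \<le> t \<longleftrightarrow> length L < 2 * ((if p then a + b else 0) + r)"
        unfolding F_def using F_le[OF o1(1), of xs t] len p_def r_def by (simp add: L1_def)
      have e2: "F L2 xs \<le> t \<longleftrightarrow> length L < 2 * ((if q then a + b else 0) + r)"
        unfolding F_def using F_le[OF o1(2), of xs t] len q_def r_def by (simp add: L2_def)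
      have e3: "F L3 xs \<le> t \<longleftrightarrow> length L - 2 * b < 2 * ((if p then a - b else 0) + r)"
        unfolding F_def using F_le[OF o1(3), of xs t] lL ab p_def r_def by (simp add: L3_def)
      show "F L xs \<le> t \<longleftrightarrow> med 3 [F L1 xs, F L2 xs, F L3 xs] \<le> t"
        unfolding med3_le e0 e1 e2 e3 using lL ab by (cases p; cases q) auto
    qed
    have "(m, F L) \<in> C"
      by (rule clone_ext[OF clone comp]) (simp add: eq)
    then show ?thesis unfolding F_def .
  qed
qed


lemma len_subst: "length (subst_tuple n x1 x2 x3) = n"
proof -
  define q where "q = n div 3"
  define r where "r = n mod 3"
  have nqr: "n = 3 * q + r" "r < 3" unfolding q_def r_def by auto
  have l: "length (subst_tuple n x1 x2 x3) = mult3 n 1 + mult3 n 2 + mult3 n 3"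
    unfolding subst_tuple_def by simp
  have ws: "mult3 n 1 = (if 1 \<le> r then q + 1 else q)" "mult3 n 2 = (if 2 \<le> r then q + 1 else q)"
      "mult3 n 3 = q" unfolding mult3_def q_def r_def by auto
  have "r = 0 \<or> r = 1 \<or> r = 2" using nqr by auto
  then show ?thesis unfolding l ws using nqr by auto
qed

lemma ar:
  fixes n k :: nat
  assumes "n \<ge> 6" "even n" "k = n div 2 \<or> k = n div 2 + 1"
  shows "2 \<le> (if p1 then 1 else 0) + (if p2 then 1 else 0) + (if p3 then 1 else (0::nat)) \<longleftrightarrow>
     k \<le> (if p1 then mult3 n 1 else 0) + (if p2 then mult3 n 2 else 0) + (if p3 then mult3 n 3 else 0)"
proof -
  obtain h where h: "n = 2 * h" using assms(2) by (auto elim: evenE)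
  define q where "q = n div 3"
  define r where "r = n mod 3"
  have nqr: "n = 3 * q + r" "r < 3" unfolding q_def r_def by auto
  have kk: "k = h \<or> k = h + 1" using assms(3) h by auto
  define w1 where "w1 = mult3 n 1"
  define w2 where "w2 = mult3 n 2"
  define w3 where "w3 = mult3 n 3"
  have ws: "w1 = (if 1 \<le> r then q + 1 else q)" "w2 = (if 2 \<le> r then q + 1 else q)"
      "w3 = q" unfolding mult3_def q_def r_def w1_def w2_def w3_def by auto
  have r3: "r = 0 \<or> r = 1 \<or> r = 2" using nqr by auto
  have f: "w1 < k \<and> w2 < k \<and> w3 < k \<and> k \<le> w1 + w2 \<and> k \<le> w1 + w3 \<and> k \<le> w2 + w3"
    using r3
  proof (elim disjE)
    assume "r = 0" then show ?thesis using ws nqr kk h assms(1) by (simp; arith)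
  next
    assume "r = 1" then show ?thesis using ws nqr kk h assms(1) by (simp; arith)
  next
    assume "r = 2" then show ?thesis using ws nqr kk h assms(1) by (simp; arith)
  qed
  show ?thesis unfolding w1_def[symmetric] w2_def[symmetric] w3_def[symmetric]
    using f by (cases p1; cases p2; cases p3; simp)
qed

lemma subst_med:
  fixes x1 x2 x3 :: "'a::linorder"
  assumes "n \<ge> 6" "even n" "k = n div 2 \<or> k = n div 2 + 1"
  shows "med 3 [x1, x2, x3] = kth_smallest k (subst_tuple n x1 x2 x3)"
proof (rule thr_eq)
  fix t
  have k: "1 \<le> k" "k \<le> length (subst_tuple n x1 x2 x3)" using assms len_subst[of n x1 x2 x3] by auto
  have cnt: "length (filter (\<lambda>x. x \<le> t) (subst_tuple n x1 x2 x3)) =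
     (if x1 \<le> t then mult3 n 1 else 0) + (if x2 \<le> t then mult3 n 2 else 0) + (if x3 \<le> t then mult3 n 3 else 0)"
    unfolding subst_tuple_def by simp
  show "med 3 [x1, x2, x3] \<le> t \<longleftrightarrow> kth_smallest k (subst_tuple n x1 x2 x3) \<le> t"
    unfolding med3_le kth_le[OF k] cnt by (rule ar[OF assms])
qed

lemma med3_in:
  fixes C :: "('a::linorder) operation set"
  assumes clone: "is_clone C" and f: "(n, kth_smallest k) \<in> C"
    and id: "\<And>x1 x2 x3 :: 'a. med 3 [x1, x2, x3] = kth_smallest k (subst_tuple n x1 x2 x3)"
  shows "(3, med 3) \<in> C"
proof -
  define gs where "gs = map (\<lambda>i (xs::'a list). xs ! i) (subst_tuple n 0 1 (2::nat))"
  have "(3, \<lambda>xs. kth_smallest k (map (\<lambda>g. g xs) gs)) \<in> C"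
  proof (rule clone_comp[OF clone f])
    show "length gs = n" by (simp add: gs_def len_subst)
    have "set (subst_tuple n 0 1 (2::nat)) \<subseteq> {0, 1, 2}" by (auto simp: subst_tuple_def)
    then show "\<forall>g\<in>set gs. (3, g) \<in> C" unfolding gs_def
    proof (intro ballI)
      fix g assume s: "set (subst_tuple n 0 1 (2::nat)) \<subseteq> {0, 1, 2}"
        and "g \<in> set (map (\<lambda>i (xs::'a list). xs ! i) (subst_tuple n 0 1 (2::nat)))"
      then obtain i where "i \<in> set (subst_tuple n 0 1 (2::nat))" "g = (\<lambda>xs. xs ! i)" by auto
      moreover then have "i < 3" using s by auto
      ultimately show "(3, g) \<in> C" using clone_proj[OF clone] by simp
    qed
  qed
  moreover have "\<forall>xs. length xs = 3 \<longrightarrow> med 3 xs = kth_smallest k (map (\<lambda>g. g xs) gs)"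
  proof (intro allI impI)
    fix xs :: "'a list" assume l: "length xs = 3"
    then obtain a b c where xs: "xs = [a, b, c]"
      by (cases xs; cases "tl xs"; cases "tl (tl xs)"; auto)
    have "map (\<lambda>g. g xs) gs = subst_tuple n a b c"
      unfolding gs_def subst_tuple_def xs by simp
    then show "med 3 xs = kth_smallest k (map (\<lambda>g. g xs) gs)" using id xs by simp
  qed
  ultimately show ?thesis by (rule clone_ext[OF clone])
qed

lemma medm_in:
  fixes C :: "('a::linorder) operation set"
  assumes clone: "is_clone C" and m3: "(3, med 3) \<in> C" and m: "odd m"
  shows "(m, med m) \<in> C"
proof -
  have "(m, \<lambda>xs. kth_smallest ((length [0..<m] + 1) div 2) (map (nth xs) [0..<m])) \<in> C"
    by (rule med_idx[OF clone m3]) (use m in auto)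
  moreover have "\<forall>xs. length xs = m \<longrightarrow> med m xs = kth_smallest ((length [0..<m] + 1) div 2) (map (nth xs) [0..<m])"
    by (auto simp: med_def map_nth)
  ultimately show ?thesis by (rule clone_ext[OF clone])
qed

theorem mainTheorem13:
  fixes n :: nat
  assumes "n \<ge> 6" and "even n"
  shows "(3, med 3 :: 'a::linorder list \<Rightarrow> 'a) \<in> clone_gen {(n, kth_smallest (n div 2))}
       \<and> (3, med 3 :: 'a list \<Rightarrow> 'a) \<in> clone_gen {(n, kth_smallest (n div 2 + 1))}
       \<and> (\<forall>x1 x2 x3 :: 'a. med 3 [x1, x2, x3] = kth_smallest (n div 2) (subst_tuple n x1 x2 x3))
       \<and> (\<forall>x1 x2 x3 :: 'a. med 3 [x1, x2, x3] = kth_smallest (n div 2 + 1) (subst_tuple n x1 x2 x3))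
       \<and> (\<forall>m. odd m \<and> m \<ge> 3 \<longrightarrow>
            (m, med m :: 'a list \<Rightarrow> 'a) \<in> clone_gen {(n, kth_smallest (n div 2))}
          \<and> (m, med m :: 'a list \<Rightarrow> 'a) \<in> clone_gen {(n, kth_smallest (n div 2 + 1))})"
proof -
  have i1: "\<And>x1 x2 x3 :: 'a. med 3 [x1, x2, x3] = kth_smallest (n div 2) (subst_tuple n x1 x2 x3)"
    by (rule subst_med) (use assms in auto)
  have i2: "\<And>x1 x2 x3 :: 'a. med 3 [x1, x2, x3] = kth_smallest (n div 2 + 1) (subst_tuple n x1 x2 x3)"
    by (rule subst_med) (use assms in auto)
  have g: "(m, med m :: 'a list \<Rightarrow> 'a) \<in> clone_gen {(n, kth_smallest k)}"
    if "odd m" "\<And>x1 x2 x3 :: 'a. med 3 [x1, x2, x3] = kth_smallest k (subst_tuple n x1 x2 x3)" for m k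
    unfolding clone_gen_def
  proof (intro InterI, clarify)
    fix C :: "'a operation set" assume c: "is_clone C" "{(n, kth_smallest k)} \<subseteq> C"
    have "(3, med 3) \<in> C"
      by (rule med3_in[OF c(1) _ that(2)]) (use c(2) in simp)
    then show "(m, med m) \<in> C"
      by (rule medm_in[OF c(1) _ that(1)])
  qed
  show ?thesis using g[OF _ i1] g[OF _ i2] i1 i2 by auto
qed

end
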